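(* Let $\Sigma,\Gamma$ be finite alphabets, $k>0$, $f:\Sigma^*\to\Gamma^*$, and $\tau$ a tier on $\Sigma\cup\Gamma$. If $f$ is $k$-TISL on tier $\tau$, then there is a tier $\upsilon$ on $\Sigma\times\Gamma^*$ such that $f$ is $k$-TSSL on tier $\upsilon$. Likewise, if $f$ is $k$-TOSL on tier $\tau$, then there is a tier $\varphi$ on $\Sigma\times\Gamma^*$ such that $f$ is $k$-TSSL on tier $\varphi$.
   Context: Strings: $\lambda$ is the empty string; $\rtimes$ is a boundary symbol not in any alphabet. For $m\ge0$, $\mathrm{suff}^m(x)$ is the string of the last $m$ symbols of $\rtimes^mx$. $\mathrm{lcp}(A)$ is the longest common prefix of a set of strings $A$. For $f:\Sigma^*\to\Gamma^*$: $f^{\gets}(x):=\mathrm{lcp}(\{f(xy)\mid y\in\Sigma^*\})$, and $f^{\to}_x$ is defined by $f(xy)=f^{\gets}(x)f^{\to}_x(y)$. A tier on a (possibly infinite) alphabet $A$ is a homomorphism $\tau:A^*\to A^*$ with $\tau(a)\in\{a,\lambda\}$ for each $a\in A$. Given $i,j>0$ and a tier $\tau$ on $\Sigma\cup\Gamma$, $f$ is $i,j$-TIOSL on $\tau$ if for all $w,x\in\Sigma^*$, $\mathrm{suff}^{i-1}(\tau(w))=\mathrm{suff}^{i-1}(\tau(x))$ and $\mathrm{suff}^{j-1}(\tau(f^{\gets}(w)))=\mathrm{suff}^{j-1}(\tau(f^{\gets}(x)))$ imply $f^{\to}_w=f^{\to}_x$. $f$ is $k$-TISL on $\tau$ if it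 is $k,1$-TIOSL on $\tau$, and $k$-TOSL on $\tau$ if it is $1,k$-TIOSL on $\tau$. Actions of $f$: $\mathbb{A}_f:=\{\langle x,y\rangle\in\Sigma\times\Gamma^*\mid\exists z\in\Sigma^*.\ f^{\gets}(zx)=f^{\gets}(z)y\}$, written $x:y$. The run $f^{\Leftarrow}(x)\in\mathbb{A}_f^*$: if $|x|\le1$, $f^{\Leftarrow}(x):=x:f^{\gets}(x)$; if $x=yz$ with $|y|\ge1$, $|z|=1$, then $f^{\Leftarrow}(x):=f^{\Leftarrow}(y)(z:w)$ where $f^{\gets}(x)=f^{\gets}(y)w$. For a tier $\upsilon$ on $\Sigma\times\Gamma^*$, $f$ is $k$-TSSL on $\upsilon$ if for all $x,y\in\Sigma^*$, $\mathrm{suff}^{k-1}(\upsilon(f^{\Leftarrow}(x)))=\mathrm{suff}^{k-1}(\upsilon(f^{\Leftarrow}(y)))$ implies $f^{\to}_x=f^{\to}_y$. *)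

theory Defs
  imports Main "HOL-Library.Sublist"
begin

(* Strings are lists over a single symbol type 'c; the alphabets Sig, Gam
   are finite sets of symbols.  The boundary symbol is modelled by None. *)

definition suff :: "nat \<Rightarrow> 'c list \<Rightarrow> 'c option list" where
  "suff m x = drop (length x) (replicate m None @ map Some x)"

definition lcp :: "'c list set \<Rightarrow> 'c list" where
  "lcp A = (THE p. (\<forall>a\<in>A. prefix p a) \<and> (\<forall>q. (\<forall>a\<in>A. prefix q a) \<longrightarrow> prefix q p))"

definition fl :: "'c set \<Rightarrow> ('c list \<Rightarrow> 'c list) \<Rightarrow> 'c list \<Rightarrow> 'c list" where
  "fl Sig f x = lcp {f (x @ y) | y. y \<in> lists Sig}"

(* f^{->}_x(y), defined by f(xy) = f^{<-}(x) f^{->}_x(y) *)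
definition fr :: "'c set \<Rightarrow> ('c list \<Rightarrow> 'c list) \<Rightarrow> 'c list \<Rightarrow> 'c list \<Rightarrow> 'c list" where
  "fr Sig f x y = drop (length (fl Sig f x)) (f (x @ y))"

definition same_tail :: "'c set \<Rightarrow> ('c list \<Rightarrow> 'c list) \<Rightarrow> 'c list \<Rightarrow> 'c list \<Rightarrow> bool" where
  "same_tail Sig f w x \<longleftrightarrow> (\<forall>y\<in>lists Sig. fr Sig f w y = fr Sig f x y)"

(* a tier is given by the set of symbols it keeps: tau(a) = a if T a, else lambda *)
definition tier :: "('a \<Rightarrow> bool) \<Rightarrow> 'a list \<Rightarrow> 'a list" where
  "tier T xs = filter T xs"

definition TIOSL :: "'c set \<Rightarrow> ('c list \<Rightarrow> 'c list) \<Rightarrow> nat \<Rightarrow> nat \<Rightarrow> ('c \<Rightarrow> bool) \<Rightarrow> bool" where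
  "TIOSL Sig f i j T \<longleftrightarrow>
     (\<forall>w\<in>lists Sig. \<forall>x\<in>lists Sig.
        suff (i - 1) (tier T w) = suff (i - 1) (tier T x) \<and>
        suff (j - 1) (tier T (fl Sig f w)) = suff (j - 1) (tier T (fl Sig f x))
        \<longrightarrow> same_tail Sig f w x)"

definition TISL :: "'c set \<Rightarrow> ('c list \<Rightarrow> 'c list) \<Rightarrow> nat \<Rightarrow> ('c \<Rightarrow> bool) \<Rightarrow> bool" where
  "TISL Sig f k T \<longleftrightarrow> TIOSL Sig f k 1 T"

definition TOSL :: "'c set \<Rightarrow> ('c list \<Rightarrow> 'c list) \<Rightarrow> nat \<Rightarrow> ('c \<Rightarrow> bool) \<Rightarrow> bool" where
  "TOSL Sig f k T \<longleftrightarrow> TIOSL Sig f 1 k T"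

(* Actions x:y are pairs (x, y); the input part x is a string of length <= 1
   (length 0 only for the run of the empty string, lambda : f^{<-}(lambda)). *)
definition run :: "'c set \<Rightarrow> ('c list \<Rightarrow> 'c list) \<Rightarrow> 'c list \<Rightarrow> ('c list \<times> 'c list) list" where
  "run Sig f x =
     (if length x \<le> 1 then [(x, fl Sig f x)]
      else (take 1 x, fl Sig f (take 1 x)) #
           map (\<lambda>i. ([x ! i], drop (length (fl Sig f (take i x))) (fl Sig f (take (Suc i) x))))
               [1..<length x])"

definition TSSL :: "'c set \<Rightarrow> ('c list \<Rightarrow> 'c list) \<Rightarrow> nat \<Rightarrow> ('c list \<times> 'c list \<Rightarrow> bool) \<Rightarrow> bool" where
  "TSSL Sig f k U \<longleftrightarrow>
     (\<forall>x\<in>lists Sig. \<forall>y\<in>lists Sig.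
        suff (k - 1) (tier U (run Sig f x)) = suff (k - 1) (tier U (run Sig f y))
        \<longrightarrow> same_tail Sig f x y)"

end

theory Submission
  imports Defs
begin

lemma lcp_eq: "A \<noteq> {} \<Longrightarrow> lcp A = Longest_common_prefix A"
  unfolding lcp_def
  apply (rule the_equality)
   apply (simp add: Longest_common_prefix_prefix Longest_common_prefix_max_prefix)
  by (meson Longest_common_prefix_max_prefix Longest_common_prefix_prefix prefix_order.antisym)

lemma fl_mono:
  assumes "a \<in> Sig"
  shows "prefix (fl Sig f w) (fl Sig f (w @ [a]))"
proof -
  have ne: "{f (w @ y) |y. y \<in> lists Sig} \<noteq> {}" "{f (w @ [a] @ y) |y. y \<in> lists Sig} \<noteq> {}"
    by auto
  have "\<forall>z\<in>{f (w @ [a] @ y) |y. y \<in> lists Sig}. prefix (fl Sig f w) z"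
  proof
    fix z assume "z \<in> {f (w @ [a] @ y) |y. y \<in> lists Sig}"
    then obtain y where "z = f (w @ ([a] @ y))" "[a] @ y \<in> lists Sig" using assms by auto
    then have "z \<in> {f (w @ y) |y. y \<in> lists Sig}" by blast
    then show "prefix (fl Sig f w) z" unfolding fl_def using ne(1)
      by (simp add: lcp_eq Longest_common_prefix_prefix)
  qed
  then show ?thesis using ne(2) unfolding fl_def[of Sig f "w @ [a]"]
    by (simp add: lcp_eq Longest_common_prefix_max_prefix)
qed

lemma suff_alt: "suff m L = replicate (m - length L) None @ map Some (drop (length L - m) L)"
  unfolding suff_def
  by (cases "length L \<le> m") (auto simp: drop_map)

lemma suff_map: "suff m (map g L) = map (map_option g) (suff m L)"
  by (simp add: suff_alt drop_map)

lemma suff_append: "m \<le> length B \<Longrightarrow> suff m (A @ B) = suff m B"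
  by (simp add: suff_alt)

lemma suff_some: "filter (\<lambda>x. x \<noteq> None) (suff m L) = map Some (drop (length L - m) L)"
  by (simp add: suff_alt filter_map comp_def)

lemma suff_none: "length (filter (\<lambda>x. x = None) (suff m L)) = m - length L"
  by (simp add: suff_alt filter_map comp_def)

lemma suff_concat:
  assumes "suff m L1 = suff m L2" "[] \<notin> set L1" "[] \<notin> set L2"
  shows "suff m (concat L1) = suff m (concat L2)"
proof -
  have d: "drop (length L1 - m) L1 = drop (length L2 - m) L2"
    using arg_cong[OF assms(1), of "filter (\<lambda>x. x \<noteq> None)"] by (simp only: suff_some) (simp add: inj_map_eq_map)
  have n: "m - length L1 = m - length L2"
    using arg_cong[OF assms(1), of "\<lambda>l. length (filter (\<lambda>x. x = None) l)"] by (simp only: suff_none)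
  show ?thesis
  proof (cases "length L1 < m")
    case True
    then have "length L2 < m" using n by linarith
    then have "L1 = L2" using d True by simp
    then show ?thesis by simp
  next
    case False
    then have "length L2 \<ge> m" using n by linarith
  define S where "S = drop (length L1 - m) L1"
  have e: "drop (length L2 - m) L2 = S" using d by (simp add: S_def)
  have lS: "length S = m" using False by (simp add: S_def)
  have L1: "L1 = take (length L1 - m) L1 @ S" by (simp add: S_def)
  have L2: "L2 = take (length L2 - m) L2 @ S" using e by (metis append_take_drop_id)
  have "[] \<notin> set S" using assms(3) by (metis L2 Un_iff set_append)
  then have lc: "m \<le> length (concat S)" using lS
  proof (induction S arbitrary: m)
    case Nil then show ?case by simp
  next
    case (Cons a S)
    then have "length a \<ge> 1" by (cases a) auto
    with Cons show ?case by (cases m) auto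
  qed
  have "suff m (concat L1) = suff m (concat S)"
    by (subst L1) (simp add: suff_append[OF lc])
  moreover have "suff m (concat L2) = suff m (concat S)"
    by (subst L2) (simp add: suff_append[OF lc])
  ultimately show ?thesis by simp
  qed
qed

lemma telescope:
  assumes "1 \<le> n" "\<And>i. 1 \<le> i \<Longrightarrow> i < n \<Longrightarrow> prefix (g i) (g (Suc i))"
  shows "g 1 @ concat (map (\<lambda>i. drop (length (g i)) (g (Suc i))) [1..<n]) = g n"
  using assms
proof (induction n)
  case 0 then show ?case by simp
next
  case (Suc n)
  show ?case
  proof (cases "n = 0")
    case True then show ?thesis by simp
  next
    case False
    then have IH: "g 1 @ concat (map (\<lambda>i. drop (length (g i)) (g (Suc i))) [1..<n]) = g n"
      using Suc by auto
    have p: "prefix (g n) (g (Suc n))" using Suc.prems False by auto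
    have "[1..<Suc n] = [1..<n] @ [n]" using False by simp
    then show ?thesis using IH p
      by (simp del: upt_Suc) (metis append.assoc append_take_drop_id prefix_def take_append
          append_eq_conv_conj)
  qed
qed

lemma run_fst:
  "map fst (run Sig f x) = (if x = [] then [[]] else map (\<lambda>a. [a]) x)"
proof (cases "length x \<le> 1")
  case True then show ?thesis
    by (cases x) (auto simp: run_def)
next
  case False
  then obtain a r where x: "x = a # r" by (cases x) auto
  have "map (\<lambda>i. [x ! i]) [1..<length x] = map (\<lambda>a. [a]) r"
    by (rule nth_equalityI) (simp_all add: x del: upt_Suc)
  then show ?thesis using False
    by (simp add: run_def comp_def x)
qed

lemma run_snd:
  assumes "x \<in> lists Sig"
  shows "concat (map snd (run Sig f x)) = fl Sig f x"
proof (cases "length x \<le> 1")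
  case True then show ?thesis by (simp add: run_def)
next
  case False
  have "fl Sig f (take 1 x) @ concat (map (\<lambda>i. drop (length (fl Sig f (take i x))) (fl Sig f (take (Suc i) x))) [1..<length x])
      = fl Sig f (take (length x) x)"
  proof (rule telescope[where g = "\<lambda>i. fl Sig f (take i x)"])
    show "1 \<le> length x" using False by simp
    fix i assume "1 \<le> i" "i < length x"
    then have "take (Suc i) x = take i x @ [x ! i]" by (simp add: take_Suc_conv_app_nth)
    moreover have "x ! i \<in> Sig" using assms \<open>i < length x\<close> by (auto simp: in_lists_conv_set)
    ultimately show "prefix (fl Sig f (take i x)) (fl Sig f (take (Suc i) x))"
      by (simp add: fl_mono)
  qed
  then show ?thesis using False by (simp add: run_def comp_def)
qed

lemma concat_filter_ne: "concat (map g (filter (\<lambda>a. g a \<noteq> []) L)) = concat (map g L)"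
  by (induction L) auto

lemma same_tail_triv: "same_tail Sig f w w" by (simp add: same_tail_def)

theorem proposition17:
  fixes Sig Gam :: "'c set" and f :: "'c list \<Rightarrow> 'c list" and k :: nat and T :: "'c \<Rightarrow> bool"
  assumes "finite Sig" and "finite Gam" and "k > 0"
    and "\<forall>x\<in>lists Sig. f x \<in> lists Gam"
  shows "(TISL Sig f k T \<longrightarrow> (\<exists>U. TSSL Sig f k U)) \<and>
         (TOSL Sig f k T \<longrightarrow> (\<exists>V. TSSL Sig f k V))"
proof (intro conjI impI)
  assume H: "TISL Sig f k T"
  define U where "U = (\<lambda>p :: 'c list \<times> 'c list. fst p \<noteq> [] \<and> T (hd (fst p)))"
  have key: "map (hd \<circ> fst) (tier U (run Sig f x)) = tier T x" for x
  proof -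
    have "map (hd \<circ> fst) (filter U (run Sig f x)) = map hd (filter (\<lambda>a. a \<noteq> [] \<and> T (hd a)) (map fst (run Sig f x)))"
      by (simp add: U_def filter_map comp_def)
    also have "\<dots> = filter T x" by (simp add: run_fst filter_map comp_def)
    finally show ?thesis by (simp add: tier_def)
  qed
  have "TSSL Sig f k U"
    unfolding TSSL_def
  proof (intro ballI impI)
    fix x y assume xy: "x \<in> lists Sig" "y \<in> lists Sig"
      and e: "suff (k - 1) (tier U (run Sig f x)) = suff (k - 1) (tier U (run Sig f y))"
    have "suff (k - 1) (tier T x) = suff (k - 1) (tier T y)"
      using arg_cong[OF e, of "map (map_option (hd \<circ> fst))"]
      by (simp add: suff_map[symmetric] key)
    then show "same_tail Sig f x y" using H xy
      unfolding TISL_def TIOSL_def by (simp add: suff_def)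
  qed
  then show "\<exists>U. TSSL Sig f k U" by blast
next
  assume H: "TOSL Sig f k T"
  define U where "U = (\<lambda>p :: 'c list \<times> 'c list. filter T (snd p) \<noteq> [])"
  have key: "concat (map (filter T \<circ> snd) (tier U (run Sig f x))) = tier T (fl Sig f x)"
    if "x \<in> lists Sig" for x
  proof -
    have "concat (map (filter T \<circ> snd) (filter U (run Sig f x)))
        = concat (map (filter T \<circ> snd) (run Sig f x))"
      using concat_filter_ne[of "filter T \<circ> snd"] by (simp add: U_def comp_def)
    also have "\<dots> = filter T (concat (map snd (run Sig f x)))"
      by (simp add: filter_concat comp_def)
    also have "\<dots> = filter T (fl Sig f x)" using run_snd[OF that] by simp
    finally show ?thesis by (simp add: tier_def)
  qed
  have ne: "[] \<notin> set (map (filter T \<circ> snd) (tier U L))" for L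
    by (auto simp: tier_def U_def)
  have "TSSL Sig f k U"
    unfolding TSSL_def
  proof (intro ballI impI)
    fix x y assume xy: "x \<in> lists Sig" "y \<in> lists Sig"
      and e: "suff (k - 1) (tier U (run Sig f x)) = suff (k - 1) (tier U (run Sig f y))"
    have "suff (k - 1) (map (filter T \<circ> snd) (tier U (run Sig f x)))
        = suff (k - 1) (map (filter T \<circ> snd) (tier U (run Sig f y)))"
      using arg_cong[OF e, of "map (map_option (filter T \<circ> snd))"]
      by (simp add: suff_map)
    then have "suff (k - 1) (tier T (fl Sig f x)) = suff (k - 1) (tier T (fl Sig f y))"
      using suff_concat[OF _ ne ne] key xy by metis
    then show "same_tail Sig f x y" using H xy
      unfolding TOSL_def TIOSL_def by (simp add: suff_def)
  qed
  then show "\<exists>V. TSSL Sig f k V" by blast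
qed

end
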